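(* Let $F$ be a tame Dirichlet species with $F(1)=\emptyset$ (i.e. $F$ is empty on one-element sets). Then the Dirichlet exponential $\exp_D(F)$ is tame and its Dirichlet series satisfies $\widehat{\exp_D(F)}=\exp(\widehat{F})$.
   Context: A species is a functor from the groupoid of finite sets and bijections to $\mathbf{Set}$; it is tame if all its values are finite; a Dirichlet species is one with $F(\emptyset)=\emptyset$. For a tame species $F$, $\widehat{F}(s)=\sum_{n\ge1}\frac{|F(n)|}{n!}n^{-s}$ (formal Dirichlet series), with $F(n)$ the value on an $n$-element set. Formal Dirichlet series multiply by Dirichlet convolution of coefficients, and for $f$ with vanishing coefficient of $1^{-s}$, $\exp(f)=\sum_{m\ge0}f^m/m!$. Dirichlet product: a cartesian decomposition of a finite set $S$ is an ordered pair $(\pi_1,\pi_2)$ of equivalence relations on $S$ such that each $\pi_1$-class meets each $\pi_2$-class in exactly one element; with $S_i$ the set of $\pi_i$-classes, $(F\cdot_D G)(S)=\coprod_{(\pi_1,\pi_2)}F(S_1)\times G(S_2)$. This is symmetric monoidal on Dirichlet species with unit $I$, where $I(S)$ is a singleton if $|S|=1$ and empty otherwise. Dirichlet exponential: $F^n_D=F\cdot_D\cdots\cdot_D F$ ($n$ factors) for $n\ge1$, $F^0_D=I$; the symmetric group $S_n$ acts on $F^n_D$ via the symmetry of $\cdot_D$ (permuting the factors); $\exp_D(F)=\coprod_{n\ge0}F^n_D/S_n$, quotients and coproducts computed pointwise. *)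

theory Defs
  imports Complex_Main "HOL-Library.FSet" "HOL-Combinatorics.Permutations"
begin

text \<open>Universe of labels, closed under forming finite sets of labels
  (needed because the Dirichlet product applies F to sets of equivalence classes).\<close>
datatype V = Atom nat | Node "V fset"

definition lab :: "V set \<Rightarrow> V" where
  "lab C = Node (Abs_fset C)"

text \<open>A species (restricted to the finite subsets of the infinite label universe V):
  object part F and transport Fm sigma S : F(S) \<rightarrow> F(sigma`S) along bijections.\<close>
definition species :: "(V set \<Rightarrow> 'b set) \<Rightarrow> ((V \<Rightarrow> V) \<Rightarrow> V set \<Rightarrow> 'b \<Rightarrow> 'b) \<Rightarrow> bool" where
  "species F Fm \<longleftrightarrow>
     (\<forall>S T \<sigma>. finite S \<longrightarrow> bij_betw \<sigma> S T \<longrightarrow> (\<forall>x\<in>F S. Fm \<sigma> S x \<in> F T)) \<and>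
     (\<forall>S x. finite S \<longrightarrow> x \<in> F S \<longrightarrow> Fm id S x = x) \<and>
     (\<forall>S \<sigma> \<tau> x. finite S \<longrightarrow> inj_on \<sigma> S \<longrightarrow> inj_on \<tau> (\<sigma> ` S) \<longrightarrow> x \<in> F S \<longrightarrow>
          Fm (\<tau> \<circ> \<sigma>) S x = Fm \<tau> (\<sigma> ` S) (Fm \<sigma> S x)) \<and>
     (\<forall>S \<sigma> \<sigma>' x. finite S \<longrightarrow> (\<forall>s\<in>S. \<sigma> s = \<sigma>' s) \<longrightarrow> x \<in> F S \<longrightarrow> Fm \<sigma> S x = Fm \<sigma>' S x)"

definition tame :: "(V set \<Rightarrow> 'b set) \<Rightarrow> bool" where
  "tame F \<longleftrightarrow> (\<forall>S. finite S \<longrightarrow> finite (F S))"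

definition dirichlet_species :: "(V set \<Rightarrow> 'b set) \<Rightarrow> ((V \<Rightarrow> V) \<Rightarrow> V set \<Rightarrow> 'b \<Rightarrow> 'b) \<Rightarrow> bool" where
  "dirichlet_species F Fm \<longleftrightarrow> species F Fm \<and> F {} = {}"

text \<open>n-ary cartesian decomposition: equivalence relations pi_1..pi_n on S such that
  s \<mapsto> (class of s under each pi_i) is a bijection S \<rightarrow> S/pi_1 \<times> ... \<times> S/pi_n.
  For n = 2 this is exactly: every pi_1-class meets every pi_2-class in exactly one element.\<close>
definition cart_decomp :: "V set \<Rightarrow> (V \<times> V) set list \<Rightarrow> bool" where
  "cart_decomp S \<pi>s \<longleftrightarrow> (\<forall>r\<in>set \<pi>s. equiv S r) \<and>
     bij_betw (\<lambda>s. map (\<lambda>r. r `` {s}) \<pi>s) S (listset (map (\<lambda>r. S // r) \<pi>s))"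

definition dpowD :: "(V set \<Rightarrow> 'b set) \<Rightarrow> nat \<Rightarrow> V set \<Rightarrow> ((V \<times> V) set list \<times> 'b list) set" where
  "dpowD F n S = (if n = 0 then (if card S = 1 then {([], [])} else {})
     else {(\<pi>s, xs). length \<pi>s = n \<and> length xs = n \<and> cart_decomp S \<pi>s \<and>
            (\<forall>i<n. xs ! i \<in> F (lab ` (S // (\<pi>s ! i))))})"

definition permact :: "(nat \<Rightarrow> nat) \<Rightarrow> ('r list \<times> 'b list) \<Rightarrow> ('r list \<times> 'b list)" where
  "permact \<sigma> p = (map (\<lambda>i. fst p ! \<sigma> i) [0..<length (fst p)],
                   map (\<lambda>i. snd p ! \<sigma> i) [0..<length (snd p)])"

definition sym_orbit_rel :: "(V set \<Rightarrow> 'b set) \<Rightarrow> nat \<Rightarrow> V set \<Rightarrow>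
    (((V \<times> V) set list \<times> 'b list) \<times> ((V \<times> V) set list \<times> 'b list)) set" where
  "sym_orbit_rel F n S = {(a, b). a \<in> dpowD F n S \<and> b \<in> dpowD F n S \<and>
      (\<exists>\<sigma>. \<sigma> permutes {..<n} \<and> b = permact \<sigma> a)}"

definition expD :: "(V set \<Rightarrow> 'b set) \<Rightarrow> V set \<Rightarrow> (nat \<times> ((V \<times> V) set list \<times> 'b list) set) set" where
  "expD F S = Sigma UNIV (\<lambda>n. dpowD F n S // sym_orbit_rel F n S)"

text \<open>Formal Dirichlet series as coefficient sequences a(n), n \<ge> 1 (a(0) = 0 by convention).\<close>
definition dseries :: "(V set \<Rightarrow> 'b set) \<Rightarrow> nat \<Rightarrow> real" where
  "dseries F n = (if n = 0 then 0 else real (card (F (Atom ` {..<n}))) / fact n)"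

definition dconv :: "(nat \<Rightarrow> real) \<Rightarrow> (nat \<Rightarrow> real) \<Rightarrow> nat \<Rightarrow> real" where
  "dconv f g n = (if n = 0 then 0 else (\<Sum>d | d dvd n. f d * g (n div d)))"

definition dunit :: "nat \<Rightarrow> real" where
  "dunit n = (if n = 1 then 1 else 0)"

primrec dpow :: "(nat \<Rightarrow> real) \<Rightarrow> nat \<Rightarrow> nat \<Rightarrow> real" where
  "dpow f 0 = dunit"
| "dpow f (Suc m) = dconv f (dpow f m)"

text \<open>exp(f) = sum_m f^m/m!, coefficientwise (for f(1) = 0 each coefficient is a finite sum).\<close>
definition dexp :: "(nat \<Rightarrow> real) \<Rightarrow> nat \<Rightarrow> real" where
  "dexp f n = (\<Sum>m. dpow f m n / fact m)"

end

theory Submission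
  imports Defs
begin

definition PL :: "nat \<Rightarrow> (nat \<Rightarrow> 'a set) \<Rightarrow> 'a list set" where
  "PL n G = {xs. length xs = n \<and> (\<forall>i<n. xs!i \<in> G i)}"

lemma listset_PL: "listset As = PL (length As) (\<lambda>i. As!i)"
proof (induction As)
  case Nil
  then show ?case by (auto simp: PL_def)
next
  case (Cons A As)
  show ?case
  proof (intro set_eqI iffI)
    fix xs assume "xs \<in> listset (A # As)"
    then show "xs \<in> PL (length (A # As)) ((!) (A # As))"
      using Cons by (auto simp: set_Cons_def PL_def nth_Cons split: nat.splits)
  next
    fix xs assume a: "xs \<in> PL (length (A # As)) ((!) (A # As))"
    then obtain y ys where xs: "xs = y # ys" by (cases xs) (auto simp: PL_def)
    have "y \<in> A" using a xs by (auto simp: PL_def)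
    moreover have "ys \<in> PL (length As) ((!) As)"
      using a xs by (fastforce simp: PL_def)
    ultimately show "xs \<in> listset (A # As)"
      using Cons xs by (auto simp: set_Cons_def)
  qed
qed

lemma listset_map_PL: "listset (map G [0..<n]) = PL n G"
  by (simp add: listset_PL PL_def)

lemma PL_bij_PiE: "bij_betw (\<lambda>xs. restrict (nth xs) {..<n}) (PL n G) (PiE {..<n} G)"
  by (rule bij_betw_byWitness[where f'="\<lambda>f. map f [0..<n]"])
     (auto simp: PL_def restrict_def PiE_def extensional_def intro!: nth_equalityI)

lemma card_PL: "card (PL n G) = (\<Prod>i<n. card (G i))"
  using bij_betw_same_card[OF PL_bij_PiE] by (simp add: card_PiE)

lemma finite_PL: "(\<And>i. i < n \<Longrightarrow> finite (G i)) \<Longrightarrow> finite (PL n G)"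
  using bij_betw_finite[OF PL_bij_PiE] finite_PiE by (metis finite_lessThan lessThan_iff)

lemma PL_map_bij:
  assumes "\<And>i. i < n \<Longrightarrow> bij_betw (h i) (A i) (B i)"
  shows "bij_betw (\<lambda>l. map (\<lambda>i. h i (l!i)) [0..<n]) (PL n A) (PL n B)"
  apply (rule bij_betw_byWitness[where f'="\<lambda>l. map (\<lambda>i. inv_into (A i) (h i) (l!i)) [0..<n]"])
     apply (auto simp: PL_def intro!: nth_equalityI)
  using assms
     apply (metis bij_betw_inv_into_left)
    apply (metis assms bij_betw_inv_into_right)
   apply (metis assms bij_betwE)
  apply (metis assms bij_betwE bij_betw_inv_into)
  done


lemma card_bij_ext:
  assumes A: "finite A" and B: "finite B" and c: "card A = card B"
  shows "card {g \<in> A \<rightarrow>\<^sub>E B. bij_betw g A B} = fact (card A)"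
proof -
  obtain s0 where s0: "bij_betw s0 A B" using finite_same_card_bij[OF A B c] by blast
  let ?T = "\<lambda>p. restrict (s0 \<circ> p) A"
  let ?T' = "\<lambda>g x. if x \<in> A then inv_into A s0 (g x) else x"
  have "bij_betw ?T {p. p permutes A} {g \<in> A \<rightarrow>\<^sub>E B. bij_betw g A B}"
  proof (rule bij_betw_byWitness[where f'="?T'"])
    show "\<forall>p\<in>{p. p permutes A}. ?T' (?T p) = p"
    proof
      fix p assume p: "p \<in> {p. p permutes A}"
      then have pA: "p permutes A" by simp
      show "?T' (?T p) = p"
      proof
        fix x show "?T' (?T p) x = p x"
          using permutes_not_in[OF pA, of x] permutes_in_image[OF pA, of x]
            bij_betw_inv_into_left[OF s0, of "p x"] by auto
      qed
    qed
    show "\<forall>g\<in>{g \<in> A \<rightarrow>\<^sub>E B. bij_betw g A B}. ?T (?T' g) = g"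
    proof
      fix g assume g: "g \<in> {g \<in> A \<rightarrow>\<^sub>E B. bij_betw g A B}"
      show "?T (?T' g) = g"
      proof
        fix x show "?T (?T' g) x = g x"
          using g bij_betw_inv_into_right[OF s0, of "g x"]
          by (auto simp: restrict_def PiE_def extensional_def)
      qed
    qed
    show "?T ` {p. p permutes A} \<subseteq> {g \<in> A \<rightarrow>\<^sub>E B. bij_betw g A B}"
    proof
      fix g assume "g \<in> ?T ` {p. p permutes A}"
      then obtain p where pA: "p permutes A" and g: "g = ?T p" by auto
      have "bij_betw (s0 \<circ> p) A B" using bij_betw_trans[OF permutes_imp_bij[OF pA] s0] .
      then have "bij_betw g A B" unfolding g by (rule bij_betw_cong[THEN iffD1, rotated]) auto
      moreover have "g \<in> A \<rightarrow>\<^sub>E B" 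
      proof -
        have "g \<in> extensional A" using g by simp
        then show ?thesis unfolding PiE_def using bij_betw_imp_funcset[OF \<open>bij_betw g A B\<close>] by (rule IntI[rotated])
      qed
      ultimately show "g \<in> {g \<in> A \<rightarrow>\<^sub>E B. bij_betw g A B}" by simp
    qed
    show "?T' ` {g \<in> A \<rightarrow>\<^sub>E B. bij_betw g A B} \<subseteq> {p. p permutes A}"
    proof
      fix p assume "p \<in> ?T' ` {g \<in> A \<rightarrow>\<^sub>E B. bij_betw g A B}"
      then obtain g where g: "bij_betw g A B" and p: "p = ?T' g" by auto
      have "bij_betw (inv_into A s0 \<circ> g) A A" using bij_betw_trans[OF g bij_betw_inv_into[OF s0]] .
      then have "bij_betw p A A" unfolding p by (rule bij_betw_cong[THEN iffD1, rotated]) auto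
      moreover have "\<And>x. x \<notin> A \<Longrightarrow> p x = x" by (simp add: p)
      ultimately show "p \<in> {p. p permutes A}" using bij_imp_permutes by blast
    qed
  qed
  then have "card {p. p permutes A} = card {g \<in> A \<rightarrow>\<^sub>E B. bij_betw g A B}" by (rule bij_betw_same_card)
  then show ?thesis using card_permutations[OF refl A] by simp
qed


lemma sp_maps: "species F Fm \<Longrightarrow> finite S \<Longrightarrow> bij_betw \<sigma> S T \<Longrightarrow> x \<in> F S \<Longrightarrow> Fm \<sigma> S x \<in> F T"
  unfolding species_def by (elim conjE, erule allE[of _ S], erule allE[of _ T], erule allE[of _ \<sigma>]) simp

lemma sp_id: "species F Fm \<Longrightarrow> finite S \<Longrightarrow> x \<in> F S \<Longrightarrow> Fm id S x = x"
  unfolding species_def by (elim conjE) simp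

lemma sp_comp: "species F Fm \<Longrightarrow> finite S \<Longrightarrow> inj_on \<sigma> S \<Longrightarrow> inj_on \<tau> (\<sigma> ` S) \<Longrightarrow> x \<in> F S \<Longrightarrow>
    Fm (\<tau> \<circ> \<sigma>) S x = Fm \<tau> (\<sigma> ` S) (Fm \<sigma> S x)"
  unfolding species_def by (elim conjE, erule allE[of _ S], erule allE[of _ \<sigma>], erule allE[of _ \<tau>]) simp

lemma sp_cong: "species F Fm \<Longrightarrow> finite S \<Longrightarrow> (\<And>s. s \<in> S \<Longrightarrow> \<sigma> s = \<sigma>' s) \<Longrightarrow> x \<in> F S \<Longrightarrow>
    Fm \<sigma> S x = Fm \<sigma>' S x"
  unfolding species_def by (elim conjE, erule allE[of _ S], erule allE[of _ \<sigma>], erule allE[of _ \<sigma>']) simp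


lemma species_card_le:
  assumes sp: "species F Fm" and fin: "finite (F B)" and A: "finite A" and B: "finite B"
    and c: "card A = card B"
  shows "card (F A) \<le> card (F B)"
proof -
  obtain s where s: "bij_betw s A B" using finite_same_card_bij[OF A B c] by blast
  define t where "t = inv_into A s"
  have t: "bij_betw t B A" unfolding t_def by (rule bij_betw_inv_into[OF s])
  have sA: "s ` A = B" using s by (simp add: bij_betw_def)
  have inv: "Fm t B (Fm s A x) = x" if x: "x \<in> F A" for x
  proof -
    have i1: "inj_on s A" using s by (simp add: bij_betw_def)
    have i2: "inj_on t (s ` A)" using t sA by (simp add: bij_betw_def)
    have "Fm (t \<circ> s) A x = Fm t (s ` A) (Fm s A x)"
      by (rule sp_comp[OF sp A i1 i2 x])
    moreover have "Fm (t \<circ> s) A x = Fm id A x"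
      by (rule sp_cong[OF sp A _ x]) (simp add: t_def bij_betw_inv_into_left[OF s])
    moreover have "Fm id A x = x" by (rule sp_id[OF sp A x])
    ultimately show ?thesis using sA by simp
  qed
  have "inj_on (Fm s A) (F A)"
    by (rule inj_on_inverseI[where g="Fm t B"]) (rule inv)
  moreover have "Fm s A ` F A \<subseteq> F B" using sp_maps[OF sp A s] by blast
  ultimately show ?thesis using card_inj_on_le fin by blast
qed

lemma species_card:
  assumes sp: "species F Fm" and tm: "tame F" and A: "finite A" and B: "finite B"
    and c: "card A = card B"
  shows "card (F A) = card (F B)"
proof -
  have "finite (F A)" "finite (F B)" using tm A B unfolding tame_def by auto
  then show ?thesis
    using species_card_le[OF sp _ A B c] species_card_le[OF sp _ B A c[symmetric]] by linarith
qed

lemma lab_inj: "finite C \<Longrightarrow> finite D \<Longrightarrow> lab C = lab D \<Longrightarrow> C = D"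
  unfolding lab_def by (metis Abs_fset_inverse mem_Collect_eq V.inject(2))

lemma card_lab: "(\<And>C. C \<in> Q \<Longrightarrow> finite C) \<Longrightarrow> card (lab ` Q) = card Q"
  by (rule card_image) (meson inj_onI lab_inj)


lemma prod_list_map_nth: "prod_list (map f xs) = (\<Prod>i<length xs. f (xs!i))"
proof (induction xs)
  case Nil
  then show ?case by simp
next
  case (Cons a xs)
  then show ?case
    by (simp only: list.map prod_list.Cons length_Cons prod.lessThan_Suc_shift nth_Cons_0 nth_Cons_Suc)
qed

definition DS :: "nat \<Rightarrow> nat \<Rightarrow> nat list set" where
  "DS n k = {ds. length ds = n \<and> prod_list ds = k}"

lemma finite_DS:
  assumes "k \<ge> 1" shows "finite (DS n k)"
proof (rule finite_subset)
  show "DS n k \<subseteq> {ds. set ds \<subseteq> {..k} \<and> length ds = n}"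
  proof (rule subsetI, rule CollectI, rule conjI)
    fix ds assume ds: "ds \<in> DS n k"
    show "set ds \<subseteq> {..k}"
    proof
      fix x assume x: "x \<in> set ds"
      have "x dvd k" using ds x prod_list_dvd by (auto simp: DS_def)
      then show "x \<in> {..k}" using assms by (simp add: dvd_imp_le)
    qed
    show "length ds = n" using ds by (simp add: DS_def)
  qed
  show "finite {ds. set ds \<subseteq> {..k} \<and> length ds = n}" by (rule finite_lists_length_eq) simp
qed

lemma DS_Suc:
  assumes "k \<ge> 1"
  shows "DS (Suc n) k = (\<lambda>(d, ds). d # ds) ` (SIGMA d:{d. d dvd k}. DS n (k div d))"
proof (intro set_eqI iffI)
  fix xs assume "xs \<in> DS (Suc n) k"
  then obtain d ds where xs: "xs = d # ds" and l: "length ds = n" and p: "d * prod_list ds = k"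
    by (cases xs) (auto simp: DS_def)
  have "d > 0" using p assms by (cases d) auto
  have "d dvd k" using p by (intro dvdI[where k="prod_list ds"]) simp
  have "prod_list ds = k div d"
  proof -
    have "k div d = d * prod_list ds div d" using p by simp
    then show ?thesis using \<open>d > 0\<close> by simp
  qed
  then show "xs \<in> (\<lambda>(d, ds). d # ds) ` (SIGMA d:{d. d dvd k}. DS n (k div d))"
    using xs l \<open>d dvd k\<close> by (auto simp: DS_def intro!: image_eqI[where x="(d, ds)"])
next
  fix xs assume "xs \<in> (\<lambda>(d, ds). d # ds) ` (SIGMA d:{d. d dvd k}. DS n (k div d))"
  then obtain d ds where xs: "xs = d # ds" and d: "d dvd k" and ds: "ds \<in> DS n (k div d)" by auto
  then show "xs \<in> DS (Suc n) k" by (auto simp: DS_def)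
qed

lemma div_ge1: "d dvd k \<Longrightarrow> (k::nat) \<ge> 1 \<Longrightarrow> k div d \<ge> 1"
  by (auto elim!: dvdE)

lemma dpow_DS:
  assumes "k \<ge> 1"
  shows "dpow f n k = (\<Sum>ds\<in>DS n k. prod_list (map f ds))"
  using assms
proof (induction n arbitrary: k)
  case 0
  have "DS 0 k = (if k = 1 then {[]} else {})" by (auto simp: DS_def)
  then show ?case by (simp add: dunit_def)
next
  case (Suc n)
  have fin: "finite {d. d dvd k}" using Suc.prems by (simp add: finite_divisors_nat)
  have "dpow f (Suc n) k = (\<Sum>d | d dvd k. f d * dpow f n (k div d))"
    using Suc.prems by (simp add: dconv_def)
  also have "\<dots> = (\<Sum>d | d dvd k. \<Sum>ds\<in>DS n (k div d). prod_list (map f (d # ds)))"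
  proof (rule sum.cong[OF refl])
    fix d assume "d \<in> {d. d dvd k}"
    then have "k div d \<ge> 1" using Suc.prems div_ge1 by simp
    then show "f d * dpow f n (k div d) = (\<Sum>ds\<in>DS n (k div d). prod_list (map f (d # ds)))"
      using Suc.IH by (simp add: sum_distrib_left)
  qed
  also have "\<dots> = (\<Sum>(d, ds)\<in>(SIGMA d:{d. d dvd k}. DS n (k div d)). prod_list (map f (d # ds)))"
  proof (rule sum.Sigma[OF fin], safe)
    fix d assume "d dvd k"
    then have "k div d \<ge> 1" using Suc.prems div_ge1 by simp
    then show "finite (DS n (k div d))" by (rule finite_DS)
  qed
  also have "\<dots> = (\<Sum>ds\<in>DS (Suc n) k. prod_list (map f ds))"
    unfolding DS_Suc[OF Suc.prems]
  proof (subst sum.reindex)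
    show "inj_on (\<lambda>(d, ds). d # ds) (SIGMA d:{d. d dvd k}. DS n (k div d))"
      by (rule inj_onI) auto
  qed (simp add: case_prod_unfold)
  finally show ?case .
qed


lemma PL_cong: "(\<And>i. i < n \<Longrightarrow> G i = G' i) \<Longrightarrow> PL n G = PL n G'"
  by (auto simp: PL_def)

lemma cart_equiv: "cart_decomp S \<pi>s \<Longrightarrow> i < length \<pi>s \<Longrightarrow> equiv S (\<pi>s!i)"
  unfolding cart_decomp_def by (meson nth_mem)

lemma cart_bij: "cart_decomp S \<pi>s \<Longrightarrow>
    bij_betw (\<lambda>s. map (\<lambda>r. r``{s}) \<pi>s) S (PL (length \<pi>s) (\<lambda>i. S//\<pi>s!i))"
proof -
  assume "cart_decomp S \<pi>s"
  then have "bij_betw (\<lambda>s. map (\<lambda>r. r``{s}) \<pi>s) S (PL (length \<pi>s) ((!) (map ((//) S) \<pi>s)))"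
    unfolding cart_decomp_def listset_PL by simp
  moreover have "PL (length \<pi>s) ((!) (map ((//) S) \<pi>s)) = PL (length \<pi>s) (\<lambda>i. S//\<pi>s!i)"
    by (rule PL_cong) simp
  ultimately show ?thesis by simp
qed

lemma card_cart: "finite S \<Longrightarrow> cart_decomp S \<pi>s \<Longrightarrow> card S = (\<Prod>i<length \<pi>s. card (S//\<pi>s!i))"
  using bij_betw_same_card[OF cart_bij] card_PL by metis

definition BJ :: "'a set \<Rightarrow> 'c set \<Rightarrow> ('a \<Rightarrow> 'c) set" where
  "BJ A B = {g \<in> A \<rightarrow>\<^sub>E B. bij_betw g A B}"

definition Dset :: "nat \<Rightarrow> V set \<Rightarrow> (V \<times> V) set list set" where
  "Dset n S = {\<pi>s. length \<pi>s = n \<and> cart_decomp S \<pi>s}"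

definition Hs :: "nat \<Rightarrow> V set \<Rightarrow> (V \<times> V) set list \<Rightarrow> (V set \<Rightarrow> nat) list set" where
  "Hs n S \<pi>s = PL n (\<lambda>i. BJ (S//\<pi>s!i) {..<card (S//\<pi>s!i)})"

definition Gs :: "nat \<Rightarrow> V set \<Rightarrow> nat list \<Rightarrow> (V \<Rightarrow> nat list) set" where
  "Gs n S ds = BJ S (PL n (\<lambda>i. {..<ds!i}))"

definition KR :: "V set \<Rightarrow> (V \<Rightarrow> nat list) \<Rightarrow> nat \<Rightarrow> (V \<times> V) set" where
  "KR S g i = {(s, t). s \<in> S \<and> t \<in> S \<and> g s ! i = g t ! i}"

definition phi :: "(V \<Rightarrow> nat list) \<Rightarrow> nat \<Rightarrow> V set \<Rightarrow> nat" where
  "phi g i = (\<lambda>C. g (SOME s. s \<in> C) ! i)"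

definition Phi :: "nat \<Rightarrow> V set \<Rightarrow> (V \<times> V) set list \<times> (V set \<Rightarrow> nat) list \<Rightarrow> nat list \<times> (V \<Rightarrow> nat list)" where
  "Phi n S = (\<lambda>(\<pi>s, hs). (map (\<lambda>r. card (S//r)) \<pi>s, \<lambda>s\<in>S. map (\<lambda>i. (hs!i) (\<pi>s!i``{s})) [0..<n]))"

definition Psi :: "nat \<Rightarrow> V set \<Rightarrow> nat list \<times> (V \<Rightarrow> nat list) \<Rightarrow> (V \<times> V) set list \<times> (V set \<Rightarrow> nat) list" where
  "Psi n S = (\<lambda>(ds, g). (map (KR S g) [0..<n], map (\<lambda>i. restrict (phi g i) (S // KR S g i)) [0..<n]))"

lemma BJ_bij: "h \<in> BJ A B \<Longrightarrow> bij_betw h A B"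
  by (simp add: BJ_def)

lemma BJ_ext: "h \<in> BJ A B \<Longrightarrow> x \<notin> A \<Longrightarrow> h x = undefined"
  by (simp add: BJ_def PiE_def extensional_def)

lemma BJ_I: "bij_betw h A B \<Longrightarrow> h \<in> extensional A \<Longrightarrow> h \<in> BJ A B"
  unfolding BJ_def PiE_def using bij_betw_imp_funcset by blast

lemma Phi_in:
  assumes S: "finite S" and p: "\<pi>s \<in> Dset n S" and h: "hs \<in> Hs n S \<pi>s"
  shows "Phi n S (\<pi>s, hs) \<in> Sigma (DS n (card S)) (Gs n S)"
proof -
  have len: "length \<pi>s = n" and cd: "cart_decomp S \<pi>s" using p by (auto simp: Dset_def)
  have hl: "length hs = n" and hb: "\<And>i. i < n \<Longrightarrow> hs!i \<in> BJ (S//\<pi>s!i) {..<card (S//\<pi>s!i)}"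
    using h by (auto simp: Hs_def PL_def)
  define ds where "ds = map (\<lambda>r. card (S//r)) \<pi>s"
  have "prod_list ds = (\<Prod>i<n. card (S//\<pi>s!i))"
    unfolding ds_def prod_list_map_nth len by simp
  also have "\<dots> = card S" using card_cart[OF S cd] len by simp
  finally have dsin: "ds \<in> DS n (card S)" by (simp add: DS_def ds_def len)
  define M where "M = (\<lambda>l. map (\<lambda>i. (hs!i) (l!i)) [0..<n])"
  have Mb: "bij_betw M (PL n (\<lambda>i. S//\<pi>s!i)) (PL n (\<lambda>i. {..<ds!i}))"
    unfolding M_def ds_def
    by (rule PL_map_bij) (simp add: len BJ_bij[OF hb])
  have cb: "bij_betw (\<lambda>s. map (\<lambda>r. r``{s}) \<pi>s) S (PL n (\<lambda>i. S//\<pi>s!i))"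
    using cart_bij[OF cd] len by simp
  have "bij_betw (M \<circ> (\<lambda>s. map (\<lambda>r. r``{s}) \<pi>s)) S (PL n (\<lambda>i. {..<ds!i}))"
    by (rule bij_betw_trans[OF cb Mb])
  then have "bij_betw (\<lambda>s\<in>S. map (\<lambda>i. (hs!i) (\<pi>s!i``{s})) [0..<n]) S (PL n (\<lambda>i. {..<ds!i}))"
    by (rule bij_betw_cong[THEN iffD1, rotated]) (simp add: M_def len)
  then have "(\<lambda>s\<in>S. map (\<lambda>i. (hs!i) (\<pi>s!i``{s})) [0..<n]) \<in> Gs n S ds"
    unfolding Gs_def by (rule BJ_I) simp
  then show ?thesis using dsin by (simp add: Phi_def ds_def)
qed


lemma KR_equiv: "equiv S (KR S g i)"
  unfolding equiv_def refl_on_def sym_def trans_def KR_def by auto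

lemma KR_class: "s \<in> S \<Longrightarrow> KR S g i `` {s} = {t \<in> S. g t ! i = g s ! i}"
  unfolding KR_def by auto

lemma phi_class: "s \<in> S \<Longrightarrow> phi g i (KR S g i `` {s}) = g s ! i"
proof -
  assume s: "s \<in> S"
  let ?C = "KR S g i `` {s}"
  have "s \<in> ?C" using s KR_class by auto
  then have "(SOME t. t \<in> ?C) \<in> ?C" by (rule someI)
  then show ?thesis using s KR_class unfolding phi_def by auto
qed

lemma phi_bij:
  assumes S: "finite S" "S \<noteq> {}" and ds: "ds \<in> DS n (card S)" and g: "g \<in> Gs n S ds"
    and i: "i < n"
  shows "bij_betw (phi g i) (S // KR S g i) {..<ds!i}"
proof -
  have gb: "bij_betw g S (PL n (\<lambda>i. {..<ds!i}))" using g by (simp add: Gs_def BJ_def)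
  have len: "length ds = n" and pr: "prod_list ds = card S" using ds by (auto simp: DS_def)
  have pos: "0 < ds!j" if "j < n" for j
  proof -
    have "prod_list ds \<noteq> 0" using pr S by simp
    then have "0 \<notin> set ds" by (simp add: prod_list_zero_iff)
    then show ?thesis using that len by (metis gr0I nth_mem)
  qed
  have eqv: "equiv S (KR S g i)" by (rule KR_equiv)
  show ?thesis unfolding bij_betw_def
  proof (intro conjI)
    show "inj_on (phi g i) (S // KR S g i)"
    proof (rule inj_onI)
      fix C1 C2 assume C1: "C1 \<in> S // KR S g i" and C2: "C2 \<in> S // KR S g i"
        and e: "phi g i C1 = phi g i C2"
      obtain s where s: "s \<in> S" "C1 = KR S g i `` {s}" using C1 by (auto elim: quotientE)
      obtain t where t: "t \<in> S" "C2 = KR S g i `` {t}" using C2 by (auto elim: quotientE)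
      have "g s ! i = g t ! i" using e s t phi_class by metis
      then have "(s, t) \<in> KR S g i" using s t by (simp add: KR_def)
      then show "C1 = C2" using s t equiv_class_eq[OF eqv] by simp
    qed
    show "phi g i ` (S // KR S g i) = {..<ds!i}"
    proof (intro equalityI subsetI)
      fix v assume "v \<in> phi g i ` (S // KR S g i)"
      then obtain C where C: "C \<in> S // KR S g i" and v: "v = phi g i C" by auto
      obtain s where s: "s \<in> S" "C = KR S g i `` {s}" using C by (auto elim: quotientE)
      have "g s \<in> PL n (\<lambda>i. {..<ds!i})" using gb s by (simp add: bij_betwE)
      then show "v \<in> {..<ds!i}" using v s phi_class i by (simp add: PL_def)
    next
      fix v assume v: "v \<in> {..<ds!i}"
      define l where "l = (replicate n 0)[i := v]"
      have "l \<in> PL n (\<lambda>i. {..<ds!i})"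
        using v pos i by (auto simp: PL_def l_def nth_list_update)
      then obtain s where s: "s \<in> S" "g s = l" using gb by (metis bij_betw_def imageE)
      have "KR S g i `` {s} \<in> S // KR S g i" using s by (simp add: quotientI)
      moreover have "phi g i (KR S g i `` {s}) = v" using phi_class s i by (simp add: l_def)
      ultimately show "v \<in> phi g i ` (S // KR S g i)" by (metis imageI)
    qed
  qed
qed

lemma card_KR:
  assumes "finite S" "S \<noteq> {}" and "ds \<in> DS n (card S)" and "g \<in> Gs n S ds" and "i < n"
  shows "card (S // KR S g i) = ds!i"
  using bij_betw_same_card[OF phi_bij[OF assms]] by simp


lemma Psi_in:
  assumes S: "finite S" "S \<noteq> {}" and ds: "ds \<in> DS n (card S)" and g: "g \<in> Gs n S ds"
  shows "Psi n S (ds, g) \<in> Sigma (Dset n S) (Hs n S)"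
proof -
  define \<pi>s where "\<pi>s = map (KR S g) [0..<n]"
  define hs where "hs = map (\<lambda>i. restrict (phi g i) (S // KR S g i)) [0..<n]"
  have gb: "bij_betw g S (PL n (\<lambda>i. {..<ds!i}))" using g by (simp add: Gs_def BJ_def)
  define M where "M = (\<lambda>l. map (\<lambda>i. phi g i (l!i)) [0..<n])"
  have Mb: "bij_betw M (PL n (\<lambda>i. S // KR S g i)) (PL n (\<lambda>i. {..<ds!i}))"
    unfolding M_def by (rule PL_map_bij) (rule phi_bij[OF S ds g])
  define f where "f = (\<lambda>s. map (\<lambda>i. KR S g i `` {s}) [0..<n])"
  have fin: "f ` S \<subseteq> PL n (\<lambda>i. S // KR S g i)"
    by (auto simp: f_def PL_def quotientI)
  have "bij_betw (M \<circ> f) S (PL n (\<lambda>i. {..<ds!i}))"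
  proof (rule bij_betw_cong[THEN iffD1, OF _ gb])
    fix s assume s: "s \<in> S"
    have "length (g s) = n" using gb s by (auto dest: bij_betwE simp: PL_def)
    then show "g s = (M \<circ> f) s"
      by (intro nth_equalityI) (simp_all add: M_def f_def phi_class[OF s])
  qed
  then have fb: "bij_betw f S (PL n (\<lambda>i. S // KR S g i))"
    using bij_betw_comp_iff2[OF Mb fin] by simp
  have cd: "cart_decomp S \<pi>s"
    unfolding cart_decomp_def
  proof (intro conjI ballI)
    fix r assume "r \<in> set \<pi>s" then show "equiv S r" by (auto simp: \<pi>s_def KR_equiv)
  next
    have "listset (map ((//) S) \<pi>s) = PL n (\<lambda>i. S // KR S g i)"
      unfolding listset_PL by (simp add: \<pi>s_def) (rule PL_cong, simp)
    moreover have "(\<lambda>s. map (\<lambda>r. r `` {s}) \<pi>s) = f" by (simp add: \<pi>s_def f_def comp_def)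
    ultimately show "bij_betw (\<lambda>s. map (\<lambda>r. r `` {s}) \<pi>s) S (listset (map ((//) S) \<pi>s))"
      using fb by simp
  qed
  have "\<pi>s \<in> Dset n S" using cd by (simp add: Dset_def \<pi>s_def)
  moreover have "hs \<in> Hs n S \<pi>s"
    unfolding Hs_def PL_def
  proof (intro CollectI conjI allI impI)
    show "length hs = n" by (simp add: hs_def)
    fix i assume i: "i < n"
    have "bij_betw (restrict (phi g i) (S // KR S g i)) (S // KR S g i) {..<ds!i}"
      using phi_bij[OF S ds g i] by (rule bij_betw_cong[THEN iffD1, rotated]) simp
    then have "restrict (phi g i) (S // KR S g i) \<in> BJ (S // KR S g i) {..<ds!i}"
      by (rule BJ_I) simp
    then show "hs ! i \<in> BJ (S // \<pi>s ! i) {..<card (S // \<pi>s ! i)}"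
      using card_KR[OF S ds g i] i by (simp add: hs_def \<pi>s_def)
  qed
  ultimately show ?thesis by (simp add: Psi_def \<pi>s_def hs_def)
qed


lemma Psi_Phi:
  assumes S: "finite S" and p: "\<pi>s \<in> Dset n S" and h: "hs \<in> Hs n S \<pi>s"
  shows "Psi n S (Phi n S (\<pi>s, hs)) = (\<pi>s, hs)"
proof -
  have len: "length \<pi>s = n" and cd: "cart_decomp S \<pi>s" using p by (auto simp: Dset_def)
  have hl: "length hs = n" and hb: "\<And>i. i < n \<Longrightarrow> hs!i \<in> BJ (S//\<pi>s!i) {..<card (S//\<pi>s!i)}"
    using h by (auto simp: Hs_def PL_def)
  define g where "g = (\<lambda>s\<in>S. map (\<lambda>i. (hs!i) (\<pi>s!i``{s})) [0..<n])"
  have KRe: "KR S g i = \<pi>s!i" if i: "i < n" for i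
  proof -
    have eqv: "equiv S (\<pi>s!i)" using cart_equiv[OF cd] i len by simp
    have inj: "inj_on (hs!i) (S//\<pi>s!i)" using BJ_bij[OF hb[OF i]] by (simp add: bij_betw_def)
    show ?thesis
    proof (intro set_eqI iffI)
      fix x assume x: "x \<in> KR S g i"
      then obtain s t where x': "x = (s, t)" "s \<in> S" "t \<in> S"
        "(hs!i) (\<pi>s!i``{s}) = (hs!i) (\<pi>s!i``{t})"
        using i by (auto simp: KR_def g_def)
      then have "\<pi>s!i``{s} = \<pi>s!i``{t}"
        using inj by (meson inj_onD quotientI)
      then show "x \<in> \<pi>s!i" using x' eq_equiv_class_iff[OF eqv] by simp
    next
      fix x assume x: "x \<in> \<pi>s!i"
      then obtain s t where x': "x = (s, t)" "s \<in> S" "t \<in> S"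
        using eqv by (cases x) (auto simp: equiv_def refl_on_def)
      then have "\<pi>s!i``{s} = \<pi>s!i``{t}" using x eq_equiv_class_iff[OF eqv] by simp
      then show "x \<in> KR S g i" using x' i by (simp add: KR_def g_def)
    qed
  qed
  have m1: "map (KR S g) [0..<n] = \<pi>s"
    by (rule nth_equalityI) (simp_all add: len KRe)
  have m2: "map (\<lambda>i. restrict (phi g i) (S // KR S g i)) [0..<n] = hs"
  proof (rule nth_equalityI)
    show "length (map (\<lambda>i. restrict (phi g i) (S // KR S g i)) [0..<n]) = length hs"
      by (simp add: hl)
    fix i assume "i < length (map (\<lambda>i. restrict (phi g i) (S // KR S g i)) [0..<n])"
    then have i: "i < n" by simp
    have "restrict (phi g i) (S // \<pi>s!i) = hs!i"
    proof
      fix C show "restrict (phi g i) (S // \<pi>s!i) C = (hs!i) C"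
      proof (cases "C \<in> S // \<pi>s!i")
        case True
        then obtain s where s: "s \<in> S" "C = \<pi>s!i``{s}" by (auto elim: quotientE)
        have "phi g i C = g s ! i" using phi_class[OF s(1), of g i] KRe[OF i] s by simp
        then show ?thesis using True s i by (simp add: g_def)
      next
        case False
        then show ?thesis using BJ_ext[OF hb[OF i]] by simp
      qed
    qed
    then show "map (\<lambda>i. restrict (phi g i) (S // KR S g i)) [0..<n] ! i = hs ! i"
      using i KRe[OF i] by simp
  qed
  show ?thesis using m1 m2 by (simp add: Psi_def Phi_def g_def)
qed

lemma Phi_Psi:
  assumes S: "finite S" "S \<noteq> {}" and ds: "ds \<in> DS n (card S)" and g: "g \<in> Gs n S ds"
  shows "Phi n S (Psi n S (ds, g)) = (ds, g)"
proof -
  have gb: "bij_betw g S (PL n (\<lambda>i. {..<ds!i}))" using g by (simp add: Gs_def BJ_def)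
  have len: "length ds = n" using ds by (simp add: DS_def)
  have m1: "map (\<lambda>r. card (S // r)) (map (KR S g) [0..<n]) = ds"
    by (rule nth_equalityI) (simp_all add: len card_KR[OF S ds g])
  have m2: "(\<lambda>s\<in>S. map (\<lambda>i. (map (\<lambda>i. restrict (phi g i) (S // KR S g i)) [0..<n] ! i)
              (map (KR S g) [0..<n] ! i `` {s})) [0..<n]) = g"
  proof
    fix s show "(\<lambda>s\<in>S. map (\<lambda>i. (map (\<lambda>i. restrict (phi g i) (S // KR S g i)) [0..<n] ! i)
              (map (KR S g) [0..<n] ! i `` {s})) [0..<n]) s = g s"
    proof (cases "s \<in> S")
      case True
      have "length (g s) = n" using gb True by (auto dest: bij_betwE simp: PL_def)
      then show ?thesis using True
        by (intro nth_equalityI) (simp_all add: phi_class quotientI)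
    next
      case False
      then show ?thesis using BJ_ext[OF g[unfolded Gs_def]] by simp
    qed
  qed
  show ?thesis using m1 m2 by (simp add: Psi_def Phi_def)
qed


lemma finite_BJ: "finite A \<Longrightarrow> finite B \<Longrightarrow> finite (BJ A B)"
  unfolding BJ_def by (rule finite_subset[OF _ finite_PiE[of A "\<lambda>_. B"]]) auto

lemma card_BJ: "finite A \<Longrightarrow> finite B \<Longrightarrow> card A = card B \<Longrightarrow> card (BJ A B) = fact (card A)"
  unfolding BJ_def by (rule card_bij_ext)

lemma finite_Dset: "finite S \<Longrightarrow> finite (Dset n S)"
proof -
  assume S: "finite S"
  have "Dset n S \<subseteq> {\<pi>s. set \<pi>s \<subseteq> Pow (S \<times> S) \<and> length \<pi>s = n}"
  proof
    fix \<pi>s assume p: "\<pi>s \<in> Dset n S"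
    then have "\<forall>r\<in>set \<pi>s. equiv S r" by (simp add: Dset_def cart_decomp_def)
    then have "set \<pi>s \<subseteq> Pow (S \<times> S)" using equiv_type by blast
    then show "\<pi>s \<in> {\<pi>s. set \<pi>s \<subseteq> Pow (S \<times> S) \<and> length \<pi>s = n}" using p by (simp add: Dset_def)
  qed
  moreover have "finite {\<pi>s. set \<pi>s \<subseteq> Pow (S \<times> S) \<and> length \<pi>s = n}"
    by (rule finite_lists_length_eq) (simp add: S)
  ultimately show ?thesis by (rule finite_subset)
qed

lemma finite_quot_D:
  assumes "finite S" "\<pi>s \<in> Dset n S" "i < n"
  shows "finite (S // \<pi>s!i)"
proof -
  have "equiv S (\<pi>s!i)" using assms cart_equiv by (auto simp: Dset_def)
  then show ?thesis using assms(1) finite_quotient equiv_type by blast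
qed

lemma finite_Hs: "finite S \<Longrightarrow> \<pi>s \<in> Dset n S \<Longrightarrow> finite (Hs n S \<pi>s)"
  unfolding Hs_def by (rule finite_PL) (simp add: finite_BJ finite_quot_D)

lemma card_Hs: "finite S \<Longrightarrow> \<pi>s \<in> Dset n S \<Longrightarrow> card (Hs n S \<pi>s) = (\<Prod>i<n. fact (card (S // \<pi>s!i)))"
  unfolding Hs_def card_PL by (rule prod.cong[OF refl]) (simp add: card_BJ finite_quot_D)

lemma finite_Gs: "finite S \<Longrightarrow> finite (Gs n S ds)"
  unfolding Gs_def by (rule finite_BJ) (auto intro: finite_PL)

lemma card_Gs: "finite S \<Longrightarrow> ds \<in> DS n (card S) \<Longrightarrow> card (Gs n S ds) = fact (card S)"
proof -
  assume S: "finite S" and ds: "ds \<in> DS n (card S)"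
  have "card (PL n (\<lambda>i. {..<ds!i})) = (\<Prod>i<n. ds!i)" by (simp add: card_PL)
  also have "\<dots> = card S" using ds prod_list_map_nth[of "\<lambda>x. x" ds] by (simp add: DS_def)
  finally show ?thesis unfolding Gs_def using S by (intro card_BJ) (auto intro: finite_PL)
qed

lemma main_count:
  fixes f :: "nat \<Rightarrow> real"
  assumes S: "finite S" "S \<noteq> {}"
  shows "(\<Sum>\<pi>s\<in>Dset n S. \<Prod>i<n. fact (card (S//\<pi>s!i)) * f (card (S//\<pi>s!i)))
       = fact (card S) * (\<Sum>ds\<in>DS n (card S). prod_list (map f ds))"
proof -
  define w where "w = (\<lambda>\<pi>s. prod_list (map (\<lambda>r. f (card (S//r))) \<pi>s))"
  have k1: "card S \<ge> 1" using S by (simp add: Suc_leI card_gt_0_iff)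
  have "(\<Sum>\<pi>s\<in>Dset n S. \<Prod>i<n. fact (card (S//\<pi>s!i)) * f (card (S//\<pi>s!i)))
      = (\<Sum>\<pi>s\<in>Dset n S. \<Sum>hs\<in>Hs n S \<pi>s. w \<pi>s)"
  proof (rule sum.cong[OF refl])
    fix \<pi>s assume p: "\<pi>s \<in> Dset n S"
    have len: "length \<pi>s = n" using p by (simp add: Dset_def)
    have "(\<Sum>hs\<in>Hs n S \<pi>s. w \<pi>s) = real (card (Hs n S \<pi>s)) * w \<pi>s" by simp
    also have "\<dots> = (\<Prod>i<n. fact (card (S//\<pi>s!i))) * (\<Prod>i<n. f (card (S//\<pi>s!i)))"
      unfolding card_Hs[OF S(1) p] w_def prod_list_map_nth len by simp
    finally show "(\<Prod>i<n. fact (card (S//\<pi>s!i)) * f (card (S//\<pi>s!i))) = (\<Sum>hs\<in>Hs n S \<pi>s. w \<pi>s)"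
      by (simp add: prod.distrib)
  qed
  also have "\<dots> = (\<Sum>x\<in>Sigma (Dset n S) (Hs n S). w (fst x))"
    by (subst sum.Sigma) (auto simp: finite_Dset finite_Hs S case_prod_unfold)
  also have "\<dots> = (\<Sum>y\<in>Sigma (DS n (card S)) (Gs n S). prod_list (map f (fst y)))"
  proof (rule sum.reindex_bij_witness[where j="Phi n S" and i="Psi n S"])
    fix a assume "a \<in> Sigma (Dset n S) (Hs n S)"
    then show "Psi n S (Phi n S a) = a" using Psi_Phi[OF S(1)] by auto
  next
    fix a assume "a \<in> Sigma (Dset n S) (Hs n S)"
    then show "Phi n S a \<in> Sigma (DS n (card S)) (Gs n S)" using Phi_in[OF S(1)] by auto
  next
    fix b assume "b \<in> Sigma (DS n (card S)) (Gs n S)"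
    then show "Phi n S (Psi n S b) = b" using Phi_Psi[OF S] by auto
  next
    fix b assume "b \<in> Sigma (DS n (card S)) (Gs n S)"
    then show "Psi n S b \<in> Sigma (Dset n S) (Hs n S)" using Psi_in[OF S] by auto
  next
    fix a assume "a \<in> Sigma (Dset n S) (Hs n S)"
    then show "prod_list (map f (fst (Phi n S a))) = w (fst a)"
      by (auto simp: Phi_def w_def comp_def)
  qed
  also have "\<dots> = (\<Sum>ds\<in>DS n (card S). \<Sum>g\<in>Gs n S ds. prod_list (map f ds))"
    by (subst sum.Sigma) (auto simp: finite_DS[OF k1] finite_Gs S case_prod_unfold)
  also have "\<dots> = (\<Sum>ds\<in>DS n (card S). fact (card S) * prod_list (map f ds))"
    by (rule sum.cong[OF refl]) (simp add: card_Gs S)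
  finally show ?thesis by (simp add: sum_distrib_left)
qed


lemma card_Atom: "card (Atom ` {..<d}) = d"
  by (subst card_image) (auto simp: inj_on_def)

lemma dseries_eq:
  assumes ds: "dirichlet_species F Fm"
  shows "real (card (F (Atom ` {..<d}))) = fact d * dseries F d"
proof (cases "d = 0")
  case True
  then show ?thesis using ds by (simp add: dirichlet_species_def dseries_def)
next
  case False
  then show ?thesis by (simp add: dseries_def)
qed

lemma card_F_quot:
  assumes ds: "dirichlet_species F Fm" and tm: "tame F" and S: "finite S"
    and eqv: "equiv S r"
  shows "card (F (lab ` (S // r))) = card (F (Atom ` {..<card (S // r)}))"
proof -
  have fq: "finite (S // r)" using S eqv finite_quotient equiv_type by blast
  have cfin: "\<And>C. C \<in> S // r \<Longrightarrow> finite C"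
    using S eqv by (meson finite_subset in_quotient_imp_subset)
  show ?thesis
    by (rule species_card[OF _ tm]) (use ds fq cfin in \<open>auto simp: dirichlet_species_def card_lab card_Atom\<close>)
qed

lemma dpowD_Sigma:
  assumes "n \<noteq> 0"
  shows "dpowD F n S = Sigma (Dset n S) (\<lambda>\<pi>s. PL n (\<lambda>i. F (lab ` (S // \<pi>s!i))))"
  using assms by (auto simp: dpowD_def Dset_def PL_def)

lemma finite_dpowD_pos:
  assumes tm: "tame F" and S: "finite S" and n: "n \<noteq> 0"
  shows "finite (dpowD F n S)"
  unfolding dpowD_Sigma[OF n]
proof (rule finite_SigmaI[OF finite_Dset[OF S]])
  fix \<pi>s assume p: "\<pi>s \<in> Dset n S"
  show "finite (PL n (\<lambda>i. F (lab ` (S // \<pi>s ! i))))"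
    by (rule finite_PL) (use tm finite_quot_D[OF S p] in \<open>simp add: tame_def\<close>)
qed

lemma card_dpowD:
  assumes ds: "dirichlet_species F Fm" and tm: "tame F" and S: "finite S" "S \<noteq> {}"
    and n: "n \<noteq> 0"
  shows "real (card (dpowD F n S)) = fact (card S) * dpow (dseries F) n (card S)"
proof -
  have k1: "card S \<ge> 1" using S by (simp add: Suc_leI card_gt_0_iff)
  have "card (dpowD F n S) = (\<Sum>\<pi>s\<in>Dset n S. card (PL n (\<lambda>i. F (lab ` (S // \<pi>s!i)))))"
    unfolding dpowD_Sigma[OF n]
  proof (rule card_SigmaI[OF finite_Dset[OF S(1)]], rule ballI)
    fix \<pi>s assume p: "\<pi>s \<in> Dset n S"
    show "finite (PL n (\<lambda>i. F (lab ` (S // \<pi>s ! i))))"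
      by (rule finite_PL) (use tm finite_quot_D[OF S(1) p] in \<open>simp add: tame_def\<close>)
  qed
  then have "real (card (dpowD F n S)) =
      (\<Sum>\<pi>s\<in>Dset n S. \<Prod>i<n. fact (card (S//\<pi>s!i)) * dseries F (card (S//\<pi>s!i)))"
  proof (simp only: card_PL of_nat_sum of_nat_prod)
    show "(\<Sum>\<pi>s\<in>Dset n S. \<Prod>i<n. real (card (F (lab ` (S // \<pi>s ! i))))) =
      (\<Sum>\<pi>s\<in>Dset n S. \<Prod>i<n. fact (card (S // \<pi>s ! i)) * dseries F (card (S // \<pi>s ! i)))"
    proof (intro sum.cong prod.cong refl)
      fix \<pi>s i assume p: "\<pi>s \<in> Dset n S" and i: "i \<in> {..<n}"
      have "equiv S (\<pi>s!i)" using p i cart_equiv by (auto simp: Dset_def)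
      then show "real (card (F (lab ` (S // \<pi>s ! i)))) =
          fact (card (S // \<pi>s ! i)) * dseries F (card (S // \<pi>s ! i))"
        using card_F_quot[OF ds tm S(1)] dseries_eq[OF ds] by simp
    qed
  qed
  also have "\<dots> = fact (card S) * (\<Sum>ds\<in>DS n (card S). prod_list (map (dseries F) ds))"
    by (rule main_count[OF S])
  also have "\<dots> = fact (card S) * dpow (dseries F) n (card S)"
    using dpow_DS[OF k1] by simp
  finally show ?thesis .
qed


lemma dpowD_len: "a \<in> dpowD F n S \<Longrightarrow> length (fst a) = n \<and> length (snd a) = n"
  by (cases "n = 0") (auto simp: dpowD_def split: if_splits)

lemma permact_id: "permact id a = a"
  by (cases a) (simp add: permact_def map_nth)

lemma permact_comp:
  assumes "length (fst a) = n" "length (snd a) = n" "\<And>i. i < n \<Longrightarrow> \<sigma> i < n"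
  shows "permact \<sigma> (permact \<tau> a) = permact (\<tau> \<circ> \<sigma>) a"
  using assms by (cases a) (auto simp: permact_def intro!: nth_equalityI)

lemma permact_cong:
  assumes "length (fst a) = n" "length (snd a) = n" "\<And>i. i < n \<Longrightarrow> \<sigma> i = \<tau> i"
  shows "permact \<sigma> a = permact \<tau> a"
  using assms by (cases a) (auto simp: permact_def)

lemma perm_lt: "\<sigma> permutes {..<n} \<Longrightarrow> i < n \<Longrightarrow> \<sigma> i < n"
  using permutes_in_image by fastforce

lemma PL_perm_bij:
  assumes p: "\<sigma> permutes {..<n}"
  shows "bij_betw (\<lambda>l. map (\<lambda>i. l!\<sigma> i) [0..<n]) (PL n G) (PL n (\<lambda>i. G (\<sigma> i)))"
proof (rule bij_betw_byWitness[where f'="\<lambda>l. map (\<lambda>i. l!inv \<sigma> i) [0..<n]"])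
  have pi: "inv \<sigma> permutes {..<n}" by (rule permutes_inv[OF p])
  show "\<forall>a\<in>PL n G. map (\<lambda>i. map (\<lambda>i. a ! \<sigma> i) [0..<n] ! inv \<sigma> i) [0..<n] = a"
    using perm_lt[OF pi] permutes_inverses[OF p] by (auto simp: PL_def intro!: nth_equalityI)
  show "\<forall>a'\<in>PL n (\<lambda>i. G (\<sigma> i)). map (\<lambda>i. map (\<lambda>i. a' ! inv \<sigma> i) [0..<n] ! \<sigma> i) [0..<n] = a'"
    using perm_lt[OF p] permutes_inverses[OF p] by (auto simp: PL_def intro!: nth_equalityI)
  show "(\<lambda>l. map (\<lambda>i. l ! \<sigma> i) [0..<n]) ` PL n G \<subseteq> PL n (\<lambda>i. G (\<sigma> i))"
    using perm_lt[OF p] by (auto simp: PL_def)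
  show "(\<lambda>l. map (\<lambda>i. l ! inv \<sigma> i) [0..<n]) ` PL n (\<lambda>i. G (\<sigma> i)) \<subseteq> PL n G"
  proof
    fix l assume "l \<in> (\<lambda>l. map (\<lambda>i. l ! inv \<sigma> i) [0..<n]) ` PL n (\<lambda>i. G (\<sigma> i))"
    then obtain m where m: "m \<in> PL n (\<lambda>i. G (\<sigma> i))" and l: "l = map (\<lambda>i. m ! inv \<sigma> i) [0..<n]" by auto
    have "m ! inv \<sigma> i \<in> G i" if "i < n" for i
    proof -
      have "m ! inv \<sigma> i \<in> G (\<sigma> (inv \<sigma> i))" using m perm_lt[OF pi that] unfolding PL_def by blast
      then show ?thesis using permutes_inverses(1)[OF p, of i] by simp
    qed
    then show "l \<in> PL n G" using l by (simp add: PL_def)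
  qed
qed

lemma permact_in:
  assumes a: "a \<in> dpowD F n S" and p: "\<sigma> permutes {..<n}"
  shows "permact \<sigma> a \<in> dpowD F n S"
proof (cases "n = 0")
  case True
  then show ?thesis using a by (auto simp: dpowD_def permact_def split: if_splits)
next
  case False
  obtain \<pi>s xs where a': "a = (\<pi>s, xs)" by (cases a)
  have pD: "\<pi>s \<in> Dset n S" and xs: "xs \<in> PL n (\<lambda>i. F (lab ` (S // \<pi>s!i)))"
    using a a' dpowD_Sigma[OF False] by auto
  have len: "length \<pi>s = n" and cd: "cart_decomp S \<pi>s" using pD by (auto simp: Dset_def)
  define \<pi>s' where "\<pi>s' = map (\<lambda>i. \<pi>s!\<sigma> i) [0..<n]"
  have lt: "\<And>i. i < n \<Longrightarrow> \<sigma> i < n" using perm_lt[OF p] .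
  have cd': "cart_decomp S \<pi>s'"
    unfolding cart_decomp_def
  proof (intro conjI ballI)
    fix r assume "r \<in> set \<pi>s'"
    then obtain i where "i < n" "r = \<pi>s!\<sigma> i" by (auto simp: \<pi>s'_def)
    then show "equiv S r" using cart_equiv[OF cd] lt len by simp
  next
    have e1: "listset (map ((//) S) \<pi>s') = PL n (\<lambda>i. S // \<pi>s!\<sigma> i)"
      unfolding listset_PL by (simp add: \<pi>s'_def) (rule PL_cong, simp)
    have "bij_betw ((\<lambda>l. map (\<lambda>i. l!\<sigma> i) [0..<n]) \<circ> (\<lambda>s. map (\<lambda>r. r``{s}) \<pi>s)) S
        (PL n (\<lambda>i. S // \<pi>s!\<sigma> i))"
      using bij_betw_trans[OF cart_bij[OF cd, unfolded len] PL_perm_bij[OF p, of "\<lambda>i. S // \<pi>s!i"]] by simp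
    moreover have "((\<lambda>l. map (\<lambda>i. l!\<sigma> i) [0..<n]) \<circ> (\<lambda>s. map (\<lambda>r. r``{s}) \<pi>s))
        = (\<lambda>s. map (\<lambda>r. r `` {s}) \<pi>s')"
      using lt len by (auto simp: \<pi>s'_def)
    ultimately show "bij_betw (\<lambda>s. map (\<lambda>r. r `` {s}) \<pi>s') S (listset (map ((//) S) \<pi>s'))"
      using e1 by simp
  qed
  have "map (\<lambda>i. xs!\<sigma> i) [0..<n] \<in> PL n (\<lambda>i. F (lab ` (S // \<pi>s'!i)))"
    using xs lt by (auto simp: PL_def \<pi>s'_def)
  moreover have "\<pi>s' \<in> Dset n S" using cd' by (simp add: Dset_def \<pi>s'_def)
  moreover have "length xs = n" using xs by (simp add: PL_def)
  ultimately have "(\<pi>s', map (\<lambda>i. xs!\<sigma> i) [0..<n]) \<in> dpowD F n S"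
    unfolding dpowD_Sigma[OF False] by blast
  then show ?thesis using a' len \<open>length xs = n\<close> by (simp add: permact_def \<pi>s'_def)
qed


lemma factors_distinct:
  assumes ds: "dirichlet_species F Fm" and one: "\<forall>S. card S = 1 \<longrightarrow> F S = {}"
    and a: "a \<in> dpowD F n S" and i: "i < n" and j: "j < n" and e: "fst a ! i = fst a ! j"
  shows "i = j"
proof (rule ccontr)
  assume ij: "i \<noteq> j"
  have n: "n \<noteq> 0" using i by simp
  obtain \<pi>s xs where a': "a = (\<pi>s, xs)" by (cases a)
  have pD: "\<pi>s \<in> Dset n S" and xs: "xs \<in> PL n (\<lambda>i. F (lab ` (S // \<pi>s!i)))"
    using a a' dpowD_Sigma[OF n] by auto
  have len: "length \<pi>s = n" and cd: "cart_decomp S \<pi>s" using pD by (auto simp: Dset_def)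
  have e': "\<pi>s!i = \<pi>s!j" using e a' by simp
  have cb: "bij_betw (\<lambda>s. map (\<lambda>r. r``{s}) \<pi>s) S (PL n (\<lambda>i. S//\<pi>s!i))"
    using cart_bij[OF cd] len by simp
  have one_cls: "C1 = C2" if C1: "C1 \<in> S // \<pi>s!i" and C2: "C2 \<in> S // \<pi>s!i" for C1 C2
  proof -
    obtain s0 where s0: "s0 \<in> S" using C1 by (auto elim: quotientE)
    define l where "l = (map (\<lambda>r. r``{s0}) \<pi>s)[i := C1, j := C2]"
    have "l \<in> PL n (\<lambda>i. S//\<pi>s!i)"
      unfolding PL_def
    proof (intro CollectI conjI allI impI)
      show "length l = n" by (simp add: l_def len)
      fix k assume k: "k < n"
      show "l ! k \<in> S // \<pi>s ! k"
      proof (cases "k = j")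
        case True
        then show ?thesis using C2 e' k len by (simp add: l_def)
      next
        case False
        show ?thesis
        proof (cases "k = i")
          case True
          then show ?thesis using C1 False k len by (simp add: l_def)
        next
          case False2: False
          then show ?thesis using False k len s0 by (simp add: l_def quotientI)
        qed
      qed
    qed
    then have "l \<in> (\<lambda>s. map (\<lambda>r. r``{s}) \<pi>s) ` S" using cb by (simp add: bij_betw_def)
    then obtain s where s: "s \<in> S" "map (\<lambda>r. r``{s}) \<pi>s = l" by (elim imageE) simp
    have "\<pi>s!i``{s} = C1"
    proof -
      have "map (\<lambda>r. r``{s}) \<pi>s ! i = l ! i" using s by simp
      then show ?thesis using i ij len by (simp add: l_def)
    qed
    moreover have "\<pi>s!j``{s} = C2"
    proof -
      have "map (\<lambda>r. r``{s}) \<pi>s ! j = l ! j" using s by simp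
      then show ?thesis using j len by (simp add: l_def)
    qed
    ultimately show ?thesis using e' by simp
  qed
  have "F (lab ` (S // \<pi>s!i)) = {}"
  proof (cases "S // \<pi>s!i = {}")
    case True
    then show ?thesis using ds by (simp add: dirichlet_species_def)
  next
    case False
    then obtain C where C: "C \<in> S // \<pi>s!i" using ex_in_conv[of "S // \<pi>s!i"] by blast
    have "S // \<pi>s!i = {C}"
    proof (intro equalityI subsetI)
      fix D assume "D \<in> S // \<pi>s!i" then show "D \<in> {C}" using one_cls[OF _ C] by simp
    qed (use C in simp)
    then have "card (lab ` (S // \<pi>s!i)) = 1" by simp
    then show ?thesis using one by (elim allE[of _ "lab ` (S // \<pi>s!i)"]) simp
  qed
  moreover have "xs ! i \<in> F (lab ` (S // \<pi>s!i))" using xs i by (simp add: PL_def)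
  ultimately show False by simp
qed

lemma permact_inj:
  assumes ds: "dirichlet_species F Fm" and one: "\<forall>S. card S = 1 \<longrightarrow> F S = {}"
    and a: "a \<in> dpowD F n S"
  shows "inj_on (\<lambda>\<sigma>. permact \<sigma> a) {\<sigma>. \<sigma> permutes {..<n}}"
proof (rule inj_onI)
  fix \<sigma> \<tau> assume p: "\<sigma> \<in> {\<sigma>. \<sigma> permutes {..<n}}" and q: "\<tau> \<in> {\<sigma>. \<sigma> permutes {..<n}}"
    and e: "permact \<sigma> a = permact \<tau> a"
  have len: "length (fst a) = n" using dpowD_len[OF a] by simp
  show "\<sigma> = \<tau>"
  proof
    fix i show "\<sigma> i = \<tau> i"
    proof (cases "i < n")
      case True
      have "fst (permact \<sigma> a) ! i = fst (permact \<tau> a) ! i" using e by simp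
      then have "fst a ! \<sigma> i = fst a ! \<tau> i" using True len by (simp add: permact_def)
      then show ?thesis
        using factors_distinct[OF ds one a perm_lt perm_lt] p q True by simp
    next
      case False
      then have "i \<notin> {..<n}" by simp
      then show ?thesis using permutes_not_in[of \<sigma> "{..<n}" i] permutes_not_in[of \<tau> "{..<n}" i] p q by simp
    qed
  qed
qed

lemma orbit_rel_equiv: "equiv (dpowD F n S) (sym_orbit_rel F n S)"
  unfolding equiv_def
proof (intro conjI)
  show "sym_orbit_rel F n S \<subseteq> dpowD F n S \<times> dpowD F n S"
  proof
    fix x assume "x \<in> sym_orbit_rel F n S"
    then show "x \<in> dpowD F n S \<times> dpowD F n S" unfolding sym_orbit_rel_def by blast
  qed
  show "refl_on (dpowD F n S) (sym_orbit_rel F n S)"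
    unfolding refl_on_def
  proof (intro ballI)
    fix a assume "a \<in> dpowD F n S"
    moreover have "a = permact id a" by (simp add: permact_id)
    ultimately show "(a, a) \<in> sym_orbit_rel F n S"
      unfolding sym_orbit_rel_def using permutes_id by blast
  qed
  show "sym (sym_orbit_rel F n S)"
  proof (rule symI)
    fix a b assume ab: "(a, b) \<in> sym_orbit_rel F n S"
    then obtain \<sigma> where p: "\<sigma> permutes {..<n}" and b: "b = permact \<sigma> a"
      and A: "a \<in> dpowD F n S" and B: "b \<in> dpowD F n S"
      by (auto simp: sym_orbit_rel_def)
    have "permact (inv \<sigma>) b = permact (\<sigma> \<circ> inv \<sigma>) a"
      unfolding b using dpowD_len[OF A] perm_lt[OF permutes_inv[OF p]] by (intro permact_comp) auto
    also have "\<dots> = permact id a"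
      using dpowD_len[OF A] permutes_inverses(1)[OF p] by (intro permact_cong) auto
    finally have "a = permact (inv \<sigma>) b" by (simp add: permact_id)
    then show "(b, a) \<in> sym_orbit_rel F n S"
      using A B permutes_inv[OF p] by (auto simp: sym_orbit_rel_def)
  qed
  show "trans (sym_orbit_rel F n S)"
  proof (rule transI)
    fix a b c assume ab: "(a, b) \<in> sym_orbit_rel F n S" and bc: "(b, c) \<in> sym_orbit_rel F n S"
    then obtain \<sigma> \<tau> where p: "\<sigma> permutes {..<n}" and b: "b = permact \<sigma> a"
      and q: "\<tau> permutes {..<n}" and c: "c = permact \<tau> b"
      and A: "a \<in> dpowD F n S" and C: "c \<in> dpowD F n S"
      by (auto simp: sym_orbit_rel_def)
    have "c = permact (\<sigma> \<circ> \<tau>) a"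
      unfolding c b using dpowD_len[OF A] perm_lt[OF q] by (intro permact_comp) auto
    then show "(a, c) \<in> sym_orbit_rel F n S"
      using A C permutes_compose[OF q p] by (auto simp: sym_orbit_rel_def)
  qed
qed

lemma orbit_class:
  assumes a: "a \<in> dpowD F n S"
  shows "sym_orbit_rel F n S `` {a} = (\<lambda>\<sigma>. permact \<sigma> a) ` {\<sigma>. \<sigma> permutes {..<n}}"
proof (intro set_eqI iffI)
  fix b assume "b \<in> sym_orbit_rel F n S `` {a}"
  then obtain \<sigma> where "\<sigma> permutes {..<n}" "b = permact \<sigma> a"
    unfolding sym_orbit_rel_def by blast
  then show "b \<in> (\<lambda>\<sigma>. permact \<sigma> a) ` {\<sigma>. \<sigma> permutes {..<n}}" by blast
next
  fix b assume "b \<in> (\<lambda>\<sigma>. permact \<sigma> a) ` {\<sigma>. \<sigma> permutes {..<n}}"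
  then obtain \<sigma> where p: "\<sigma> permutes {..<n}" and b: "b = permact \<sigma> a" by blast
  have "b \<in> dpowD F n S" using permact_in[OF a p] b by simp
  then show "b \<in> sym_orbit_rel F n S `` {a}"
    unfolding sym_orbit_rel_def using a p b by blast
qed

lemma card_quot:
  assumes ds: "dirichlet_species F Fm" and one: "\<forall>S. card S = 1 \<longrightarrow> F S = {}"
    and fin: "finite (dpowD F n S)"
  shows "card (dpowD F n S) = fact n * card (dpowD F n S // sym_orbit_rel F n S)"
proof -
  let ?A = "dpowD F n S" and ?r = "sym_orbit_rel F n S"
  have eqv: "equiv ?A ?r" by (rule orbit_rel_equiv)
  have "fact n * card (?A // ?r) = card (\<Union>(?A // ?r))"
  proof (rule card_partition)
    show "finite (?A // ?r)" using fin eqv finite_quotient equiv_type by blast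
    show "finite (\<Union>(?A // ?r))" using fin Union_quotient[OF eqv] by simp
    show "card c = fact n" if "c \<in> ?A // ?r" for c
    proof -
      from that obtain a where a: "a \<in> ?A" "c = ?r `` {a}" by (auto elim: quotientE)
      have "card c = card {\<sigma>. \<sigma> permutes {..<n}}"
        unfolding a(2) orbit_class[OF a(1)] by (rule card_image[OF permact_inj[OF ds one a(1)]])
      then show "card c = fact n" using card_permutations[of "{..<n}" n] by simp
    qed
    show "c1 \<inter> c2 = {}" if "c1 \<in> ?A // ?r" "c2 \<in> ?A // ?r" "c1 \<noteq> c2" for c1 c2
      using quotient_disj[OF eqv that(1,2)] that(3) by simp
  qed
  then show ?thesis using Union_quotient[OF eqv] by simp
qed


lemma prod_list_ge2: "(\<forall>x\<in>set ds. (2::nat) \<le> x) \<Longrightarrow> 2 ^ length ds \<le> prod_list ds"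
proof (induction ds)
  case Nil
  then show ?case by simp
next
  case (Cons a ds)
  then have "2 ^ length ds \<le> prod_list ds" "2 \<le> a" by auto
  then show ?case by (simp add: mult_le_mono)
qed

lemma dseries_one:
  assumes one: "\<forall>S. card S = 1 \<longrightarrow> F S = {}"
  shows "dseries F 1 = 0"
proof -
  have "card (Atom ` {..<1}) = 1" by (rule card_Atom)
  then have "F (Atom ` {..<1}) = {}" using one by blast
  then show ?thesis by (simp add: dseries_def)
qed

lemma dpow_vanish:
  assumes f1: "f 1 = 0" and k: "k \<ge> 1" and nk: "k < n"
  shows "dpow f n k = 0"
proof -
  have "prod_list (map f ds) = 0" if ds: "ds \<in> DS n k" for ds
  proof (cases "1 \<in> set ds")
    case True
    then have "f 1 \<in> set (map f ds)" by simp
    then show ?thesis using f1 by (simp add: prod_list_zero_iff)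
  next
    case False
    have "0 \<notin> set ds"
    proof
      assume "0 \<in> set ds"
      then have "prod_list ds = 0" by (simp add: prod_list_zero_iff)
      then show False using ds k by (simp add: DS_def)
    qed
    with False have "\<forall>x\<in>set ds. (2::nat) \<le> x"
      by (metis One_nat_def less_2_cases not_less)
    then have "2 ^ n \<le> k" using prod_list_ge2 ds by (fastforce simp: DS_def)
    moreover have "n < 2 ^ n" by (rule less_exp)
    ultimately show ?thesis using nk by simp
  qed
  then show ?thesis using dpow_DS[OF k] by simp
qed

lemma dpow_zero: "dpow f m 0 = 0"
  by (cases m) (simp_all add: dunit_def dconv_def)

lemma dpowD_empty_set:
  assumes ds: "dirichlet_species F Fm"
  shows "dpowD F n {} = {}"
proof (cases "n = 0")
  case True
  then show ?thesis by (simp add: dpowD_def)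
next
  case False
  have "PL n (\<lambda>i. F (lab ` ({} // \<pi>s ! i))) = {}" for \<pi>s :: "(V \<times> V) set list"
    using ds False by (auto simp: PL_def dirichlet_species_def)
  then show ?thesis unfolding dpowD_Sigma[OF False] by simp
qed

lemma finite_dpowD:
  assumes tm: "tame F" and S: "finite S"
  shows "finite (dpowD F n S)"
proof (cases "n = 0")
  case True
  then show ?thesis by (simp add: dpowD_def)
next
  case False
  then show ?thesis using finite_dpowD_pos[OF tm S] by simp
qed

lemma card_dpowD_all:
  assumes ds: "dirichlet_species F Fm" and tm: "tame F" and S: "finite S" "S \<noteq> {}"
  shows "real (card (dpowD F n S)) = fact (card S) * dpow (dseries F) n (card S)"
proof (cases "n = 0")
  case True
  have "card S \<noteq> 0" using S by simp
  then show ?thesis using True by (auto simp: dpowD_def dunit_def)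
next
  case False
  then show ?thesis by (rule card_dpowD[OF ds tm S])
qed

lemma dpowD_big:
  assumes ds: "dirichlet_species F Fm" and tm: "tame F" and one: "\<forall>S. card S = 1 \<longrightarrow> F S = {}"
    and S: "finite S" and n: "card S < n"
  shows "dpowD F n S = {}"
proof (cases "S = {}")
  case True
  then show ?thesis using dpowD_empty_set[OF ds] by simp
next
  case False
  have k: "card S \<ge> 1" using S False by (simp add: Suc_leI card_gt_0_iff)
  have "dpow (dseries F) n (card S) = 0"
    by (rule dpow_vanish[where f="dseries F", OF dseries_one[OF one] k n])
  then have "card (dpowD F n S) = 0" using card_dpowD_all[OF ds tm S False, of n] by simp
  then show ?thesis using finite_dpowD[OF tm S] by simp
qed

lemma expD_eq:
  assumes ds: "dirichlet_species F Fm" and tm: "tame F" and one: "\<forall>S. card S = 1 \<longrightarrow> F S = {}"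
    and S: "finite S"
  shows "expD F S = Sigma {..card S} (\<lambda>n. dpowD F n S // sym_orbit_rel F n S)"
  unfolding expD_def
proof (intro set_eqI iffI)
  fix x assume x: "x \<in> Sigma UNIV (\<lambda>n. dpowD F n S // sym_orbit_rel F n S)"
  have "fst x \<le> card S"
  proof (rule ccontr)
    assume "\<not> fst x \<le> card S"
    then have "dpowD F (fst x) S = {}" using dpowD_big[OF ds tm one S] by simp
    then show False using x by (cases x) simp
  qed
  then show "x \<in> Sigma {..card S} (\<lambda>n. dpowD F n S // sym_orbit_rel F n S)" using x by (cases x) simp
qed auto

theorem lemma3p5:
  fixes F :: "V set \<Rightarrow> 'b set" and Fm :: "(V \<Rightarrow> V) \<Rightarrow> V set \<Rightarrow> 'b \<Rightarrow> 'b"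
  assumes "dirichlet_species F Fm"
    and "tame F"
    and "\<forall>S. card S = 1 \<longrightarrow> F S = {}"
  shows "tame (expD F) \<and> dseries (expD F) = dexp (dseries F)"
proof
  note ds = assms(1) and tm = assms(2) and one = assms(3)
  have finQ: "finite (dpowD F n S // sym_orbit_rel F n S)" if S: "finite S" for S n
    using finite_dpowD[OF tm S] finite_quotient equiv_type orbit_rel_equiv by metis
  show "tame (expD F)"
    unfolding tame_def
  proof (intro allI impI)
    fix S :: "V set" assume S: "finite S"
    show "finite (expD F S)" unfolding expD_eq[OF ds tm one S]
      by (rule finite_SigmaI) (auto intro: finQ[OF S])
  qed
  show "dseries (expD F) = dexp (dseries F)"
  proof
    fix k
    show "dseries (expD F) k = dexp (dseries F) k"
    proof (cases "k = 0")
      case True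
      then show ?thesis by (simp add: dseries_def dexp_def dpow_zero)
    next
      case False
      define S where "S = Atom ` {..<k}"
      have S: "finite S" "S \<noteq> {}" using False by (auto simp: S_def)
      have cS: "card S = k" by (simp add: S_def card_Atom)
      have k: "k \<ge> 1" using False by simp
      have "card (expD F S) = (\<Sum>n\<le>k. card (dpowD F n S // sym_orbit_rel F n S))"
        unfolding expD_eq[OF ds tm one S(1)] cS
        by (rule card_SigmaI) (auto intro: finQ[OF S(1)])
      then have "real (card (expD F S)) = (\<Sum>n\<le>k. real (card (dpowD F n S // sym_orbit_rel F n S)))"
        by simp
      also have "\<dots> = (\<Sum>n\<le>k. fact k * dpow (dseries F) n k / fact n)"
      proof (rule sum.cong[OF refl])
        fix n
        have "real (card (dpowD F n S)) = fact n * real (card (dpowD F n S // sym_orbit_rel F n S))"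
          using card_quot[OF ds one finite_dpowD[OF tm S(1)]] by simp
        then show "real (card (dpowD F n S // sym_orbit_rel F n S)) = fact k * dpow (dseries F) n k / fact n"
          using card_dpowD_all[OF ds tm S, of n] cS by (simp add: field_simps)
      qed
      finally have e1: "dseries (expD F) k = (\<Sum>n\<le>k. dpow (dseries F) n k / fact n)"
        using False by (simp add: dseries_def S_def sum_divide_distrib)
      have "dexp (dseries F) k = (\<Sum>n\<le>k. dpow (dseries F) n k / fact n)"
        unfolding dexp_def
        by (rule suminf_finite) (auto simp: not_le dpow_vanish[where f="dseries F", OF dseries_one[OF one] k])
      then show ?thesis using e1 by simp
    qed
  qed
qed

end
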